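(* Let $M$ be a closed manifold immersed in $(V,\omega)=(\mathbb{R}^{2d},\sum_i dx_i\wedge dy_i)$. (1) Let $n$ be odd. An $n$-gon $\mathbf{Z}=(z_1,\dots,z_n)$ in $V$ is an $n$-periodic orbit of the outer symplectic billiard correspondence if and only if its midpoint polygon $\mathbf{Q}=(Q_1,\dots,Q_n)$, $Q_i=\tfrac12(z_i+z_{i+1})$ (indices mod $n$), is inscribed in $M$ and is a critical point of the restriction to $M^{\times n}$ of $$F(Q_1,\dots,Q_n)=2\sum_{1\le i<j\le n}(-1)^{i+j-1}\omega(Q_i,Q_j).$$ (2) Let $L_1=\mathbb{R}^d_x\times\{0\}$ and $L_2=\{0\}\times\mathbb{R}^d_y$. A polygonal line $\mathbf{Z}=(z_1,\dots,z_{n+1})$ is an $n$-link outer symplectic billiard orbit connecting $L_1$ and $L_2$ if and only if the polygon $\mathbf{Q}=(Q_1,\dots,Q_n)$, $Q_i=\tfrac12(z_i+z_{i+1})$, is inscribed in $M$ and is a critical point of the restriction to $M^{\times n}$ of $$G(Q_1,\dots,Q_n)=2\sum_{i=1}^n q_i\cdot q_i'+4\sum_{1\le i<j\le n}(-1)^{j-i}q_j\cdot q_i',$$ where $Q_i=(q_i,q_i')$ with $q_i,q_i'\in\mathbb{R}^d$.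
   Context: Points of $V$ are written $(x,y)$ with $x,y\in\mathbb{R}^d$, and $\omega((x,y),(x',y'))=x\cdot y'-y\cdot x'$. Points of $M$ are identified with their images; for a point $Q$ of $M$, $T^\omega_QM=\{\xi:\omega(\xi,\zeta)=0\ \forall\zeta\in T_QM\}$. Two points $z,z'$ are in outer symplectic billiard correspondence with respect to $M$ if $\tfrac12(z+z')=Q$ is a point of $M$ and $z'-z\in T^\omega_QM$. An $n$-periodic orbit is an $n$-gon $(z_1,\dots,z_n)$ with $z_i,z_{i+1}$ in correspondence for all $i$ (indices mod $n$). An $n$-link orbit connecting $L_1$ and $L_2$ is $(z_1,\dots,z_{n+1})$ with $z_1\in L_1$, $z_{n+1}\in L_2$ and $z_i,z_{i+1}$ in correspondence for $i=1,\dots,n$. "Inscribed in $M$" means every $Q_i$ is a point of $M$. *)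

theory Defs
  imports "HOL-Analysis.Analysis"
begin

type_synonym 'd V = "(real^'d) \<times> (real^'d)"

definition omega :: "'d::finite V \<Rightarrow> 'd V \<Rightarrow> real" where
  "omega z w = fst z \<bullet> snd w - snd z \<bullet> fst w"

text \<open>C-infinity on an open set U of R^k: all iterated partial derivatives exist
  and are continuous (coinductive formulation: a family of functions containing g,
  closed under taking partial derivatives, all continuous on U).\<close>
definition smooth_on :: "(real^'k::finite) set \<Rightarrow> (real^'k \<Rightarrow> 'b::real_normed_vector) \<Rightarrow> bool" where
  "smooth_on U g \<longleftrightarrow> (\<exists>S. g \<in> S \<and> (\<forall>h\<in>S. continuous_on U h \<and>
      (\<forall>i. \<exists>h'\<in>S. \<forall>u\<in>U. ((\<lambda>t. h (u + t *\<^sub>R axis i 1)) has_vector_derivative h' u) (at 0))))"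

text \<open>A closed (compact, Hausdorff, without boundary) manifold, given as the space of
  the type 'p with a smooth atlas A of charts (U, phi), phi : U subset R^k -> 'p, together
  with a smooth immersion f : 'p -> V.  Smoothness of f and of the atlas is expressed by
  smoothness of the local representations f o phi; immersion = injective differential.\<close>
definition closed_immersed_manifold ::
  "('p::t2_space \<Rightarrow> 'd::finite V) \<Rightarrow> (((real^'k::finite) set) \<times> (real^'k \<Rightarrow> 'p)) set \<Rightarrow> bool" where
  "closed_immersed_manifold f A \<longleftrightarrow>
     compact (UNIV :: 'p set) \<and>
     (\<Union>(U,\<phi>)\<in>A. \<phi> ` U) = UNIV \<and>
     (\<forall>(U,\<phi>)\<in>A. open U \<and> open (\<phi> ` U) \<and> homeomorphism U (\<phi> ` U) \<phi> (inv_into U \<phi>) \<and>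
        smooth_on U (f \<circ> \<phi>) \<and>
        (\<forall>u\<in>U. \<exists>D. ((f \<circ> \<phi>) has_derivative D) (at u) \<and> inj D))"

definition tangent_space ::
  "('p \<Rightarrow> 'd::finite V) \<Rightarrow> (((real^'k::finite) set) \<times> (real^'k \<Rightarrow> 'p)) set \<Rightarrow> 'p \<Rightarrow> 'd V set" where
  "tangent_space f A p = {v. \<exists>(U,\<phi>)\<in>A. \<exists>u\<in>U. \<phi> u = p \<and>
       (\<exists>D. ((f \<circ> \<phi>) has_derivative D) (at u) \<and> v \<in> range D)}"

definition symp_orth ::
  "('p \<Rightarrow> 'd::finite V) \<Rightarrow> (((real^'k::finite) set) \<times> (real^'k \<Rightarrow> 'p)) set \<Rightarrow> 'p \<Rightarrow> 'd V set" where
  "symp_orth f A p = {\<xi>. \<forall>\<zeta>\<in>tangent_space f A p. omega \<xi> \<zeta> = 0}"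

definition osb_corr ::
  "('p \<Rightarrow> 'd::finite V) \<Rightarrow> (((real^'k::finite) set) \<times> (real^'k \<Rightarrow> 'p)) set \<Rightarrow> 'd V \<Rightarrow> 'd V \<Rightarrow> bool" where
  "osb_corr f A z z' \<longleftrightarrow> (\<exists>p. f p = (1/2) *\<^sub>R (z + z') \<and> z' - z \<in> symp_orth f A p)"

definition cnext :: "nat \<Rightarrow> nat \<Rightarrow> nat" where
  "cnext n i = (if i = n then 1 else i + 1)"

definition periodic_orbit ::
  "('p \<Rightarrow> 'd::finite V) \<Rightarrow> (((real^'k::finite) set) \<times> (real^'k \<Rightarrow> 'p)) set \<Rightarrow> nat \<Rightarrow> (nat \<Rightarrow> 'd V) \<Rightarrow> bool" where
  "periodic_orbit f A n z \<longleftrightarrow> (\<forall>i\<in>{1..n}. osb_corr f A (z i) (z (cnext n i)))"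

definition L1 :: "'d::finite V set" where "L1 = {(x, 0) | x. True}"
definition L2 :: "'d::finite V set" where "L2 = {(0, y) | y. True}"

definition link_orbit ::
  "('p \<Rightarrow> 'd::finite V) \<Rightarrow> (((real^'k::finite) set) \<times> (real^'k \<Rightarrow> 'p)) set \<Rightarrow> nat \<Rightarrow> (nat \<Rightarrow> 'd V) \<Rightarrow> bool" where
  "link_orbit f A n z \<longleftrightarrow> z 1 \<in> L1 \<and> z (n+1) \<in> L2 \<and> (\<forall>i\<in>{1..n}. osb_corr f A (z i) (z (i+1)))"

definition inscribed_critical ::
  "('p \<Rightarrow> 'd::finite V) \<Rightarrow> (((real^'k::finite) set) \<times> (real^'k \<Rightarrow> 'p)) set \<Rightarrow> nat \<Rightarrow>
   ((nat \<Rightarrow> 'd V) \<Rightarrow> real) \<Rightarrow> (nat \<Rightarrow> 'd V) \<Rightarrow> bool" where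
  "inscribed_critical f A n Phi Q \<longleftrightarrow> (\<exists>p. (\<forall>i\<in>{1..n}. f (p i) = Q i) \<and>
      (\<forall>\<xi>. (\<forall>i\<in>{1..n}. \<xi> i \<in> tangent_space f A (p i)) \<longrightarrow>
         ((\<lambda>t. Phi (\<lambda>i. Q i + t *\<^sub>R \<xi> i)) has_real_derivative 0) (at 0)))"

definition funF :: "nat \<Rightarrow> (nat \<Rightarrow> 'd::finite V) \<Rightarrow> real" where
  "funF n Q = 2 * (\<Sum>j\<in>{1..n}. \<Sum>i\<in>{1..<j}. (-1) ^ (i + j - 1) * omega (Q i) (Q j))"

definition funG :: "nat \<Rightarrow> (nat \<Rightarrow> 'd::finite V) \<Rightarrow> real" where
  "funG n Q = 2 * (\<Sum>i\<in>{1..n}. fst (Q i) \<bullet> snd (Q i))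
     + 4 * (\<Sum>j\<in>{1..n}. \<Sum>i\<in>{1..<j}. (-1) ^ (j - i) * (fst (Q j) \<bullet> snd (Q i)))"

end

theory Submission
  imports Defs
begin

lemma omega_add_left: "omega (a + b) c = omega a c + omega b c"
  by (simp add: omega_def inner_add_left)
lemma omega_add_right: "omega a (b + c) = omega a b + omega a c"
  by (simp add: omega_def inner_add_right)
lemma omega_scaleR_left: "omega (r *\<^sub>R a) c = r * omega a c"
  by (simp add: omega_def algebra_simps)
lemma omega_scaleR_right: "omega a (r *\<^sub>R c) = r * omega a c"
  by (simp add: omega_def algebra_simps)
lemma omega_diff_right: "omega a (b - c) = omega a b - omega a c"
  by (simp add: omega_def inner_diff_right)
lemma omega_skew: "omega a b = - omega b a"
  by (simp add: omega_def inner_commute)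
lemma omega_zero_left[simp]: "omega 0 a = 0"
  by (simp add: omega_def)
lemma omega_sum_right: "omega a (\<Sum>x\<in>S. g x) = (\<Sum>x\<in>S. omega a (g x))"
  by (simp add: omega_def fst_sum snd_sum inner_sum_right sum_subtractf)

lemma sum_swap_tri:
  "(\<Sum>j\<in>{1..n::nat}. \<Sum>i\<in>{1..<j}. g i j) = (\<Sum>i\<in>{1..n}. \<Sum>j\<in>{i<..n}. (g i j :: 'a::comm_monoid_add))"
proof (induction n)
  case 0 then show ?case by simp
next
  case (Suc n)
  have e: "\<And>i. i \<le> n \<Longrightarrow> {i<..Suc n} = insert (Suc n) {i<..n}" by auto
  have "(\<Sum>i\<in>{1..Suc n}. \<Sum>j\<in>{i<..Suc n}. g i j) = (\<Sum>i\<in>{1..n}. \<Sum>j\<in>{i<..Suc n}. g i j)"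
    by (simp add: sum.cl_ivl_Suc)
  also have "\<dots> = (\<Sum>i\<in>{1..n}. g i (Suc n) + (\<Sum>j\<in>{i<..n}. g i j))"
    by (rule sum.cong) (auto simp: e)
  also have "\<dots> = (\<Sum>i\<in>{1..<Suc n}. g i (Suc n)) + (\<Sum>j\<in>{1..n}. \<Sum>i\<in>{1..<j}. g i j)"
    using Suc by (simp add: sum.distrib atLeastLessThanSuc_atLeastAtMost)
  finally show ?case by (simp add: sum.cl_ivl_Suc add.commute)
qed

lemma tele1:
  fixes y :: "nat \<Rightarrow> 'a::real_vector"
  assumes "k \<le> n"
  shows "(\<Sum>j\<in>{k<..n}. (-1::real)^(j-k) *\<^sub>R (y j + y (Suc j))) = (-1::real)^(n-k) *\<^sub>R y (Suc n) - y (Suc k)"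
  using assms
proof (induction n rule: dec_induct)
  case base then show ?case by simp
next
  case (step m)
  have e: "{k<..Suc m} = insert (Suc m) {k<..m}" using step by auto
  have p: "(-1::real)^(Suc m - k) = - ((-1)^(m-k))" using step by (simp add: Suc_diff_le)
  show ?case using step by (simp add: e p algebra_simps Suc_diff_le)
qed

lemma tele2:
  fixes y :: "nat \<Rightarrow> 'a::real_vector"
  assumes "1 \<le> k"
  shows "(\<Sum>i\<in>{1..<k}. (-1::real)^(k-i) *\<^sub>R (y i + y (Suc i))) = (-1::real)^(k-1) *\<^sub>R y 1 - y k"
  using assms
proof (induction k rule: dec_induct)
  case base then show ?case by simp
next
  case (step m)
  have "(\<Sum>i\<in>{1..<Suc m}. (-1::real)^(Suc m-i) *\<^sub>R (y i + y (Suc i)))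
     = (\<Sum>i\<in>{1..<m}. (-1::real)^(Suc m-i) *\<^sub>R (y i + y (Suc i))) + (-1::real) *\<^sub>R (y m + y (Suc m))"
    using step by (simp add: sum.atLeastLessThan_Suc)
  also have "(\<Sum>i\<in>{1..<m}. (-1::real)^(Suc m-i) *\<^sub>R (y i + y (Suc i)))
     = - (\<Sum>i\<in>{1..<m}. (-1::real)^(m-i) *\<^sub>R (y i + y (Suc i)))"
    by (simp add: sum_negf[symmetric] Suc_diff_le)
  finally have "(\<Sum>i\<in>{1..<Suc m}. (-1::real)^(Suc m-i) *\<^sub>R (y i + y (Suc i)))
     = - ((-1::real)^(m-1) *\<^sub>R y 1 - y m) + (-1::real) *\<^sub>R (y m + y (Suc m))"
    using step by simp
  moreover have "(-1::real)^m = - ((-1)^(m-1))" using step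
    by (metis One_nat_def Suc_pred less_le_trans mult_minus1 power_Suc zero_less_one)
  moreover have "- ((-1::real)^(m-1) *\<^sub>R y 1 - y m) + (-1::real) *\<^sub>R (y m + y (Suc m))
      = (-1::real)^(Suc m - 1) *\<^sub>R y 1 - y (Suc m)"
    using calculation(2) by (simp add: algebra_simps)
  ultimately show ?case by (metis (no_types))
qed
lemma omega_line: "omega (a + t *\<^sub>R b) (c + t *\<^sub>R d) = omega a c + t * (omega a d + omega b c) + t^2 * omega b d"
  by (simp add: omega_def inner_add_left inner_add_right algebra_simps power2_eq_square)

definition bf :: "'d::finite V \<Rightarrow> 'd V \<Rightarrow> real" where "bf u v = fst u \<bullet> snd v"

lemma bf_line: "bf (a + t *\<^sub>R b) (c + t *\<^sub>R d) = bf a c + t * (bf a d + bf b c) + t^2 * bf b d"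
  by (simp add: bf_def inner_add_left inner_add_right algebra_simps power2_eq_square)

lemma quad_deriv: "((\<lambda>t. a + t * b + t^2 * c) has_real_derivative b) (at (0::real))"
  by (auto intro!: derivative_eq_intros)

definition KF :: "nat \<Rightarrow> (nat \<Rightarrow> 'd::finite V) \<Rightarrow> (nat \<Rightarrow> 'd V) \<Rightarrow> real" where
  "KF n Q \<xi> = 2 * (\<Sum>j\<in>{1..n}. \<Sum>i\<in>{1..<j}. (-1) ^ (i + j - 1) * (omega (Q i) (\<xi> j) + omega (\<xi> i) (Q j)))"

lemma funF_line: "funF n (\<lambda>i. Q i + t *\<^sub>R \<xi> i) = funF n Q + t * KF n Q \<xi> + t^2 * funF n \<xi>"
  by (simp add: funF_def KF_def omega_line distrib_left sum.distrib sum_distrib_left mult_ac)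

definition KG :: "nat \<Rightarrow> (nat \<Rightarrow> 'd::finite V) \<Rightarrow> (nat \<Rightarrow> 'd V) \<Rightarrow> real" where
  "KG n Q \<xi> = 2 * (\<Sum>i\<in>{1..n}. bf (Q i) (\<xi> i) + bf (\<xi> i) (Q i))
     + 4 * (\<Sum>j\<in>{1..n}. \<Sum>i\<in>{1..<j}. (-1) ^ (j - i) * (bf (Q j) (\<xi> i) + bf (\<xi> j) (Q i)))"

lemma funG_eq: "funG n Q = 2 * (\<Sum>i\<in>{1..n}. bf (Q i) (Q i))
     + 4 * (\<Sum>j\<in>{1..n}. \<Sum>i\<in>{1..<j}. (-1) ^ (j - i) * bf (Q j) (Q i))"
  by (simp add: funG_def bf_def)

lemma funG_line: "funG n (\<lambda>i. Q i + t *\<^sub>R \<xi> i) = funG n Q + t * KG n Q \<xi> + t^2 * funG n \<xi>"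
  by (simp add: funG_eq KG_def bf_line distrib_left sum.distrib sum_distrib_left mult_ac)

definition WF :: "nat \<Rightarrow> (nat \<Rightarrow> 'd::finite V) \<Rightarrow> nat \<Rightarrow> 'd V" where
  "WF n Q k = 2 *\<^sub>R (\<Sum>j\<in>{k<..n}. (-1::real) ^ (k + j - 1) *\<^sub>R Q j) - 2 *\<^sub>R (\<Sum>i\<in>{1..<k}. (-1::real) ^ (i + k - 1) *\<^sub>R Q i)"

lemma KF_eq: "KF n Q \<xi> = (\<Sum>k\<in>{1..n}. omega (\<xi> k) (WF n Q k))"
proof -
  have A: "(\<Sum>j\<in>{1..n}. \<Sum>i\<in>{1..<j}. (-1::real) ^ (i + j - 1) * omega (Q i) (\<xi> j))
    = - (\<Sum>k\<in>{1..n}. \<Sum>i\<in>{1..<k}. (-1::real) ^ (i + k - 1) * omega (\<xi> k) (Q i))"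
    by (simp add: sum_negf[symmetric] omega_skew[of "Q _"])
  have B: "(\<Sum>j\<in>{1..n}. \<Sum>i\<in>{1..<j}. (-1::real) ^ (i + j - 1) * omega (\<xi> i) (Q j))
    = (\<Sum>k\<in>{1..n}. \<Sum>j\<in>{k<..n}. (-1::real) ^ (k + j - 1) * omega (\<xi> k) (Q j))"
    by (rule sum_swap_tri)
  have "KF n Q \<xi> = 2 * (\<Sum>k\<in>{1..n}. \<Sum>j\<in>{k<..n}. (-1::real) ^ (k + j - 1) * omega (\<xi> k) (Q j))
     - 2 * (\<Sum>k\<in>{1..n}. \<Sum>i\<in>{1..<k}. (-1::real) ^ (i + k - 1) * omega (\<xi> k) (Q i))"
    unfolding KF_def distrib_left sum.distrib A B by simp
  also have "\<dots> = (\<Sum>k\<in>{1..n}. omega (\<xi> k) (WF n Q k))"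
    by (simp add: WF_def omega_diff_right omega_scaleR_right omega_sum_right sum_distrib_left sum_subtractf)
  finally show ?thesis .
qed

definition WG :: "nat \<Rightarrow> (nat \<Rightarrow> 'd::finite V) \<Rightarrow> nat \<Rightarrow> 'd V" where
  "WG n Q k = (- (2 *\<^sub>R fst (Q k) + 4 *\<^sub>R (\<Sum>j\<in>{k<..n}. (-1::real) ^ (j - k) *\<^sub>R fst (Q j))),
               2 *\<^sub>R snd (Q k) + 4 *\<^sub>R (\<Sum>i\<in>{1..<k}. (-1::real) ^ (k - i) *\<^sub>R snd (Q i)))"

lemma KG_eq: "KG n Q \<xi> = (\<Sum>k\<in>{1..n}. omega (\<xi> k) (WG n Q k))"
proof -
  have B: "(\<Sum>j\<in>{1..n}. \<Sum>i\<in>{1..<j}. (-1::real) ^ (j - i) * bf (Q j) (\<xi> i))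
    = (\<Sum>k\<in>{1..n}. \<Sum>j\<in>{k<..n}. (-1::real) ^ (j - k) * bf (Q j) (\<xi> k))"
    by (rule sum_swap_tri)
  have "KG n Q \<xi> = 2 * (\<Sum>i\<in>{1..n}. bf (Q i) (\<xi> i) + bf (\<xi> i) (Q i))
     + 4 * (\<Sum>k\<in>{1..n}. \<Sum>j\<in>{k<..n}. (-1::real) ^ (j - k) * bf (Q j) (\<xi> k))
     + 4 * (\<Sum>k\<in>{1..n}. \<Sum>i\<in>{1..<k}. (-1::real) ^ (k - i) * bf (\<xi> k) (Q i))"
    unfolding KG_def distrib_left sum.distrib B by simp
  also have "\<dots> = (\<Sum>k\<in>{1..n}. omega (\<xi> k) (WG n Q k))"
    by (simp add: WG_def omega_def bf_def inner_add_right inner_sum_right inner_minus_right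
          sum_distrib_left sum.distrib algebra_simps inner_commute[of "snd (\<xi> _)"])
  finally show ?thesis .
qed

lemma crit_iff:
  fixes n :: nat
  assumes T0: "\<forall>i. 0 \<in> T i"
    and D: "\<forall>\<xi>. ((\<lambda>t. Phi (\<lambda>i. Q i + t *\<^sub>R \<xi> i)) has_real_derivative (\<Sum>k\<in>{1..n}. omega (\<xi> k) (W k))) (at 0)"
  shows "(\<forall>\<xi>. (\<forall>i\<in>{1..n}. \<xi> i \<in> T i) \<longrightarrow> ((\<lambda>t. Phi (\<lambda>i. Q i + t *\<^sub>R \<xi> i)) has_real_derivative 0) (at 0))
     \<longleftrightarrow> (\<forall>i\<in>{1..n}. \<forall>\<zeta>\<in>T i. omega (W i) \<zeta> = 0)"
proof
  assume H: "\<forall>\<xi>. (\<forall>i\<in>{1..n}. \<xi> i \<in> T i) \<longrightarrow> ((\<lambda>t. Phi (\<lambda>i. Q i + t *\<^sub>R \<xi> i)) has_real_derivative 0) (at 0)"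
  show "\<forall>i\<in>{1..n}. \<forall>\<zeta>\<in>T i. omega (W i) \<zeta> = 0"
  proof (intro ballI)
    fix i \<zeta> assume i: "i \<in> {1..n}" and z: "\<zeta> \<in> T i"
    define \<xi> where "\<xi> = (\<lambda>j. if j = i then \<zeta> else 0)"
    have "\<forall>j\<in>{1..n}. \<xi> j \<in> T j" using z T0 by (simp add: \<xi>_def)
    then have d0: "((\<lambda>t. Phi (\<lambda>i. Q i + t *\<^sub>R \<xi> i)) has_real_derivative 0) (at 0)" using H by blast
    have "(\<Sum>k\<in>{1..n}. omega (\<xi> k) (W k)) = 0" using DERIV_unique[OF D[rule_format, of \<xi>] d0] .
    moreover have "(\<Sum>k\<in>{1..n}. omega (\<xi> k) (W k)) = omega \<zeta> (W i)"
    proof -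
      have "(\<Sum>k\<in>{1..n}. omega (\<xi> k) (W k)) = (\<Sum>k\<in>{1..n}. if k = i then omega \<zeta> (W i) else 0)"
        by (rule sum.cong) (auto simp: \<xi>_def)
      also have "... = omega \<zeta> (W i)" using i by (subst sum.delta) auto
      finally show ?thesis .
    qed
    ultimately show "omega (W i) \<zeta> = 0" using omega_skew[of "W i" \<zeta>] by simp
  qed
next
  assume H: "\<forall>i\<in>{1..n}. \<forall>\<zeta>\<in>T i. omega (W i) \<zeta> = 0"
  show "\<forall>\<xi>. (\<forall>i\<in>{1..n}. \<xi> i \<in> T i) \<longrightarrow> ((\<lambda>t. Phi (\<lambda>i. Q i + t *\<^sub>R \<xi> i)) has_real_derivative 0) (at 0)"
  proof (intro allI impI)
    fix \<xi> assume x: "\<forall>i\<in>{1..n}. \<xi> i \<in> T i"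
    have "(\<Sum>k\<in>{1..n}. omega (\<xi> k) (W k)) = 0"
    proof (rule sum.neutral, rule ballI)
      fix k assume "k \<in> {1..n}"
      then have "omega (W k) (\<xi> k) = 0" using H x by blast
      then show "omega (\<xi> k) (W k) = 0" using omega_skew[of "\<xi> k" "W k"] by simp
    qed
    then show "((\<lambda>t. Phi (\<lambda>i. Q i + t *\<^sub>R \<xi> i)) has_real_derivative 0) (at 0)"
      using D[rule_format, of \<xi>] by simp
  qed
qed

lemma tan0:
  assumes "closed_immersed_manifold f A"
  shows "0 \<in> tangent_space f A p"
proof -
  have "p \<in> (\<Union>(U,\<phi>)\<in>A. \<phi> ` U)" using assms by (simp add: closed_immersed_manifold_def)
  then obtain U \<phi> u where UA: "(U,\<phi>) \<in> A" and u: "u \<in> U" and p: "\<phi> u = p" by auto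
  then obtain D where D: "((f \<circ> \<phi>) has_derivative D) (at u)"
    using assms unfolding closed_immersed_manifold_def by fast
  have "linear D" using D has_derivative_linear by blast
  then have "0 \<in> range D" by (metis linear_0 rangeI)
  then show ?thesis unfolding tangent_space_def using UA u p D by blast
qed

lemma insc_iff:
  fixes n :: nat
  assumes man: "closed_immersed_manifold f A"
    and D: "\<forall>\<xi>. ((\<lambda>t. Phi (\<lambda>i. Q i + t *\<^sub>R \<xi> i)) has_real_derivative (\<Sum>k\<in>{1..n}. omega (\<xi> k) (W k))) (at 0)"
  shows "inscribed_critical f A n Phi Q \<longleftrightarrow> (\<forall>i\<in>{1..n}. \<exists>p. f p = Q i \<and> W i \<in> symp_orth f A p)"
proof
  assume "inscribed_critical f A n Phi Q"
  then obtain p where fp: "\<forall>i\<in>{1..n}. f (p i) = Q i" and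
    H: "\<forall>\<xi>. (\<forall>i\<in>{1..n}. \<xi> i \<in> tangent_space f A (p i)) \<longrightarrow> ((\<lambda>t. Phi (\<lambda>i. Q i + t *\<^sub>R \<xi> i)) has_real_derivative 0) (at 0)"
    unfolding inscribed_critical_def by (elim exE conjE) 
  have T0: "\<forall>i. 0 \<in> tangent_space f A (p i)" using tan0[OF man] by blast
  have C: "\<forall>i\<in>{1..n}. \<forall>\<zeta>\<in>tangent_space f A (p i). omega (W i) \<zeta> = 0"
    using crit_iff[of "\<lambda>i. tangent_space f A (p i)", OF T0 D] H by (rule iffD1)
  show "\<forall>i\<in>{1..n}. \<exists>p. f p = Q i \<and> W i \<in> symp_orth f A p"
  proof (intro ballI)
    fix i assume i: "i \<in> {1..n}"
    have "f (p i) = Q i \<and> W i \<in> symp_orth f A (p i)"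
      using fp C i unfolding symp_orth_def by simp
    then show "\<exists>p. f p = Q i \<and> W i \<in> symp_orth f A p" by (rule exI)
  qed
next
  assume "\<forall>i\<in>{1..n}. \<exists>p. f p = Q i \<and> W i \<in> symp_orth f A p"
  then obtain p where p: "\<forall>i\<in>{1..n}. f (p i) = Q i \<and> W i \<in> symp_orth f A (p i)"
    by (rule bchoice[THEN exE])
  have T0: "\<forall>i. 0 \<in> tangent_space f A (p i)" using tan0[OF man] by blast
  have C: "\<forall>i\<in>{1..n}. \<forall>\<zeta>\<in>tangent_space f A (p i). omega (W i) \<zeta> = 0"
    using p unfolding symp_orth_def by simp
  have H: "\<forall>\<xi>. (\<forall>i\<in>{1..n}. \<xi> i \<in> tangent_space f A (p i)) \<longrightarrow> ((\<lambda>t. Phi (\<lambda>i. Q i + t *\<^sub>R \<xi> i)) has_real_derivative 0) (at 0)"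
    using crit_iff[of "\<lambda>i. tangent_space f A (p i)", OF T0 D] C by (rule iffD2)
  have fp: "\<forall>i\<in>{1..n}. f (p i) = Q i" using p by simp
  show "inscribed_critical f A n Phi Q"
    unfolding inscribed_critical_def using fp H by (intro exI[of _ p] conjI)
qed

lemma sgn1: "i < j \<Longrightarrow> 1 \<le> i \<Longrightarrow> (-1::real)^(i+j-1) = -((-1)^(j-i))"
proof -
  assume a: "i < j" "1 \<le> i"
  have e: "i+j-1 = Suc ((j-i) + 2*(i-1))" using a by arith
  have "(-1::real)^(i+j-1) = (-1)^(Suc ((j-i) + 2*(i-1)))" by (simp only: e)
  also have "\<dots> = -((-1)^(j-i))" by (simp only: power_Suc power_add power_mult) simp
  finally show ?thesis .
qed

lemma WF_id:
  fixes y :: "nat \<Rightarrow> 'd::finite V"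
  assumes n: "odd n" and k: "1 \<le> k" "k \<le> n"
    and Q: "\<forall>i\<in>{1..n}. Q i = (1/2) *\<^sub>R (y i + y (Suc i))" and y: "y (Suc n) = y 1"
  shows "WF n Q k = y (Suc k) - y k"
proof -
  have s1: "2 *\<^sub>R (\<Sum>j\<in>{k<..n}. (-1::real) ^ (k + j - 1) *\<^sub>R Q j)
      = - (\<Sum>j\<in>{k<..n}. (-1::real)^(j-k) *\<^sub>R (y j + y (Suc j)))"
  proof -
    have "(\<Sum>j\<in>{k<..n}. (-1::real) ^ (k + j - 1) *\<^sub>R Q j)
        = (\<Sum>j\<in>{k<..n}. (-1/2::real) *\<^sub>R ((-1::real)^(j-k) *\<^sub>R (y j + y (Suc j))))"
    proof (rule sum.cong)
      fix j assume j: "j \<in> {k<..n}"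
      have a: "(-1::real)^(k+j-1) = -((-1)^(j-k))" using j k by (intro sgn1) auto
      have b: "Q j = (1/2) *\<^sub>R (y j + y (Suc j))" using Q j k by auto
      show "(-1::real) ^ (k + j - 1) *\<^sub>R Q j = (-1/2::real) *\<^sub>R ((-1::real)^(j-k) *\<^sub>R (y j + y (Suc j)))"
        unfolding a b by simp
    qed simp
    then show ?thesis by (simp add: scaleR_sum_right sum_negf)
  qed
  have s2: "2 *\<^sub>R (\<Sum>i\<in>{1..<k}. (-1::real) ^ (i + k - 1) *\<^sub>R Q i)
      = - (\<Sum>i\<in>{1..<k}. (-1::real)^(k-i) *\<^sub>R (y i + y (Suc i)))"
  proof -
    have "(\<Sum>i\<in>{1..<k}. (-1::real) ^ (i + k - 1) *\<^sub>R Q i)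
        = (\<Sum>i\<in>{1..<k}. (-1/2::real) *\<^sub>R ((-1::real)^(k-i) *\<^sub>R (y i + y (Suc i))))"
    proof (rule sum.cong)
      fix i assume i: "i \<in> {1..<k}"
      have a: "(-1::real)^(i+k-1) = -((-1)^(k-i))" using i k by (intro sgn1) auto
      have b: "Q i = (1/2) *\<^sub>R (y i + y (Suc i))" using Q i k by auto
      show "(-1::real) ^ (i + k - 1) *\<^sub>R Q i = (-1/2::real) *\<^sub>R ((-1::real)^(k-i) *\<^sub>R (y i + y (Suc i)))"
        unfolding a b by simp
    qed simp
    then show ?thesis by (simp add: scaleR_sum_right sum_negf)
  qed
  have e: "(-1::real)^(n-k) = (-1)^(k-1)"
  proof -
    have "even (n-k) \<longleftrightarrow> even (k-1)" using n k by presburger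
    then show ?thesis by (simp add: minus_one_power_iff)
  qed
  show ?thesis
    unfolding WF_def s1 s2 tele1[OF k(2)] tele2[OF k(1)] y e by (simp add: algebra_simps)
qed

lemma WG_id:
  fixes z :: "nat \<Rightarrow> 'd::finite V"
  assumes k: "1 \<le> k" "k \<le> n"
    and Q: "\<forall>i\<in>{1..n}. Q i = (1/2) *\<^sub>R (z i + z (Suc i))" and z1: "snd (z 1) = 0" and zn: "fst (z (Suc n)) = 0"
  shows "WG n Q k = z (Suc k) - z k"
proof -
  have s1: "(\<Sum>j\<in>{k<..n}. (-1::real) ^ (j - k) *\<^sub>R fst (Q j))
      = (1/2::real) *\<^sub>R (\<Sum>j\<in>{k<..n}. (-1::real)^(j-k) *\<^sub>R (fst (z j) + fst (z (Suc j))))"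
    unfolding scaleR_sum_right by (rule sum.cong) (use Q k in \<open>auto simp: algebra_simps\<close>)
  have s2: "(\<Sum>i\<in>{1..<k}. (-1::real) ^ (k - i) *\<^sub>R snd (Q i))
      = (1/2::real) *\<^sub>R (\<Sum>i\<in>{1..<k}. (-1::real)^(k-i) *\<^sub>R (snd (z i) + snd (z (Suc i))))"
    unfolding scaleR_sum_right by (rule sum.cong) (use Q k in \<open>auto simp: algebra_simps\<close>)
  have Qk: "Q k = (1/2) *\<^sub>R (z k + z (Suc k))" using Q k by simp
  note t1 = tele1[OF k(2), of "\<lambda>i. fst (z i)"]
  note t2 = tele2[OF k(1), of "\<lambda>i. snd (z i)"]
  show ?thesis
    unfolding WG_def s1 s2 t1 t2 zn z1 Qk
    by (simp add: prod_eq_iff vec_eq_iff algebra_simps)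
qed

lemma derivF: "\<forall>\<xi>. ((\<lambda>t. funF n (\<lambda>i. Q i + t *\<^sub>R \<xi> i)) has_real_derivative (\<Sum>k\<in>{1..n}. omega (\<xi> k) (WF n Q k))) (at 0)"
  unfolding funF_line KF_eq[symmetric] by (intro allI quad_deriv)

lemma derivG: "\<forall>\<xi>. ((\<lambda>t. funG n (\<lambda>i. Q i + t *\<^sub>R \<xi> i)) has_real_derivative (\<Sum>k\<in>{1..n}. omega (\<xi> k) (WG n Q k))) (at 0)"
  unfolding funG_line KG_eq[symmetric] by (intro allI quad_deriv)

theorem mainTheorem8:
  fixes f :: "'p::t2_space \<Rightarrow> 'd::finite V"
    and A :: "((real^'k::finite) set \<times> (real^'k \<Rightarrow> 'p)) set"
  assumes "closed_immersed_manifold f A"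
  shows "(\<forall>n (z :: nat \<Rightarrow> 'd V). odd n \<longrightarrow>
            (periodic_orbit f A n z \<longleftrightarrow>
             inscribed_critical f A n (funF n) (\<lambda>i. (1/2) *\<^sub>R (z i + z (cnext n i)))))
       \<and> (\<forall>n (z :: nat \<Rightarrow> 'd V). n \<ge> 1 \<longrightarrow> z 1 \<in> L1 \<longrightarrow> z (n+1) \<in> L2 \<longrightarrow>
            (link_orbit f A n z \<longleftrightarrow>
             inscribed_critical f A n (funG n) (\<lambda>i. (1/2) *\<^sub>R (z i + z (i+1)))))"
proof (intro conjI allI impI)
  fix n :: nat and z :: "nat \<Rightarrow> 'd V"
  assume n: "odd n"
  define Q where "Q = (\<lambda>i. (1/2) *\<^sub>R (z i + z (cnext n i)))"
  define y where "y = (\<lambda>i. if i = Suc n then z 1 else z i)"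
  have Qy: "\<forall>i\<in>{1..n}. Q i = (1/2) *\<^sub>R (y i + y (Suc i))"
    by (auto simp: Q_def y_def cnext_def)
  have W: "WF n Q i = z (cnext n i) - z i" if i: "i \<in> {1..n}" for i
  proof -
    have "WF n Q i = y (Suc i) - y i" using i by (intro WF_id[OF n _ _ Qy]) (auto simp: y_def)
    then show ?thesis using i by (auto simp: y_def cnext_def)
  qed
  have "inscribed_critical f A n (funF n) Q \<longleftrightarrow> (\<forall>i\<in>{1..n}. \<exists>p. f p = Q i \<and> WF n Q i \<in> symp_orth f A p)"
    by (rule insc_iff[OF assms derivF])
  also have "\<dots> \<longleftrightarrow> periodic_orbit f A n z"
    unfolding periodic_orbit_def osb_corr_def using W by (auto simp: Q_def)
  finally show "periodic_orbit f A n z \<longleftrightarrow> inscribed_critical f A n (funF n) (\<lambda>i. (1/2) *\<^sub>R (z i + z (cnext n i)))"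
    unfolding Q_def by simp
next
  fix n :: nat and z :: "nat \<Rightarrow> 'd V"
  assume n: "n \<ge> 1" and z1: "z 1 \<in> L1" and zn: "z (n+1) \<in> L2"
  define Q where "Q = (\<lambda>i. (1/2) *\<^sub>R (z i + z (i+1)))"
  have Qz: "\<forall>i\<in>{1..n}. Q i = (1/2) *\<^sub>R (z i + z (Suc i))" by (simp add: Q_def)
  have s1: "snd (z 1) = 0" using z1 by (auto simp: L1_def)
  have s2: "fst (z (Suc n)) = 0" using zn by (auto simp: L2_def)
  have W: "WG n Q i = z (i+1) - z i" if i: "i \<in> {1..n}" for i
    using i WG_id[OF _ _ Qz s1 s2, of i] by simp
  have "inscribed_critical f A n (funG n) Q \<longleftrightarrow> (\<forall>i\<in>{1..n}. \<exists>p. f p = Q i \<and> WG n Q i \<in> symp_orth f A p)"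
    by (rule insc_iff[OF assms derivG])
  also have "\<dots> \<longleftrightarrow> link_orbit f A n z"
    unfolding link_orbit_def osb_corr_def using W z1 zn by (auto simp: Q_def)
  finally show "link_orbit f A n z \<longleftrightarrow> inscribed_critical f A n (funG n) (\<lambda>i. (1/2) *\<^sub>R (z i + z (i+1)))"
    unfolding Q_def by simp
qed

end
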